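(* Let $\phi\ge1$. Consider an instance of the knapsack problem with arbitrary profits $p_1,\ldots,p_n\in\mathbb{R}_{\ge0}$ (and arbitrary capacity) in which every weight $w_i$ is chosen uniformly at random from an arbitrary interval $A_i\subseteq[0,1]$ of length $1/\phi$, independently of the other weights. Then the expected running time of the Nemhauser–Ullmann algorithm is $O(n^3\phi)$.
   Context: The Nemhauser–Ullmann algorithm: set $\mathcal{P}_0=\{0^n\}$; for $i=1,\ldots,n$ set $\mathcal{Q}_i=\mathcal{P}_{i-1}\cup\mathcal{P}_{i-1}^{+i}$ (where $\mathcal{S}^{+i}$ is obtained from $\mathcal{S}$ by setting coordinate $i$ of every vector to $1$) and let $\mathcal{P}_i$ be the set of elements of $\mathcal{Q}_i$ not dominated by any other element of $\mathcal{Q}_i$ (one per profit–weight pair), where $y$ dominates $x$ if $p^{\mathsf T}y\ge p^{\mathsf T}x$, $w^{\mathsf T}y\le w^{\mathsf T}x$ with one inequality strict; finally return $\arg\max_{x\in\mathcal{P}_n}\{p^{\mathsf T}x\mid w^{\mathsf T}x\le W\}$. The running time refers to the implementation on a unit-cost RAM (constant-time arithmetic and comparisons on reals) whose running time is $\Theta(\sum_{i=0}^{n-1}|\mathcal{P}_i|)$, which keeps the profit–weight values of each $\mathcal{P}_i$ sorted by weight and removes dominated ones by a linear sweep. *)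

theory Defs
  imports "HOL-Probability.Probability"
begin

definition dominates :: "real \<times> real \<Rightarrow> real \<times> real \<Rightarrow> bool" where
  "dominates y x \<longleftrightarrow> fst y \<ge> fst x \<and> snd y \<le> snd x \<and> (fst y > fst x \<or> snd y < snd x)"

definition nondominated :: "(real \<times> real) set \<Rightarrow> (real \<times> real) set" where
  "nondominated Q = {x \<in> Q. \<not> (\<exists>y\<in>Q. dominates y x)}"

text \<open>The Nemhauser--Ullmann sets P_k, represented by their profit--weight pairs
  (one element per pair). Items are indexed 0..n-1; P_k uses the first k items.\<close>
fun nu_set :: "(nat \<Rightarrow> real) \<Rightarrow> (nat \<Rightarrow> real) \<Rightarrow> nat \<Rightarrow> (real \<times> real) set" where
  "nu_set p w 0 = {(0, 0)}"
| "nu_set p w (Suc k) =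
     nondominated (nu_set p w k \<union> (\<lambda>(q, v). (q + p k, v + w k)) ` nu_set p w k)"

text \<open>Running time of the Nemhauser--Ullmann algorithm (up to constant factors):
  sum of |P_k| for k = 0..n-1.\<close>
definition nu_time :: "nat \<Rightarrow> (nat \<Rightarrow> real) \<Rightarrow> (nat \<Rightarrow> real) \<Rightarrow> nat" where
  "nu_time n p w = (\<Sum>k<n. card (nu_set p w k))"

end

theory Submission
  imports Defs
begin


definition V :: "(nat \<Rightarrow> real) \<Rightarrow> (nat \<Rightarrow> real) \<Rightarrow> nat \<Rightarrow> (real \<times> real) set" where
  "V p w k = (\<lambda>S. (sum p S, sum w S)) ` Pow {..<k}"

definition wdom :: "real \<times> real \<Rightarrow> real \<times> real \<Rightarrow> bool" where
  "wdom u v \<longleftrightarrow> fst u \<ge> fst v \<and> snd u \<le> snd v"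

lemma wdom_trans: "wdom a b \<Longrightarrow> wdom b c \<Longrightarrow> wdom a c"
  by (auto simp: wdom_def)

lemma wdom_dom: "wdom a b \<Longrightarrow> dominates b c \<Longrightarrow> dominates a c"
  by (auto simp: wdom_def dominates_def)

lemma dom_wdom: "dominates a b \<Longrightarrow> wdom a b"
  by (auto simp: wdom_def dominates_def)

lemma ex_max_fin:
  fixes f :: "'a \<Rightarrow> real"
  assumes "finite A" "A \<noteq> {}"
  shows "\<exists>x\<in>A. \<forall>y\<in>A. f y \<le> f x"
proof -
  have "Max (f ` A) \<in> f ` A" using assms by simp
  then obtain x where "x \<in> A" "f x = Max (f ` A)" by auto
  then show ?thesis using assms by (metis Max_ge finite_imageI image_eqI)
qed

lemma ex_min_fin:
  fixes f :: "'a \<Rightarrow> real"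
  assumes "finite A" "A \<noteq> {}"
  shows "\<exists>x\<in>A. \<forall>y\<in>A. f x \<le> f y"
  using ex_max_fin[OF assms, of "\<lambda>x. - f x"] by auto

lemma nondom_cover:
  assumes "finite Q" "u \<in> Q"
  shows "\<exists>q\<in>nondominated Q. wdom q u"
proof -
  let ?S = "{q\<in>Q. wdom q u}"
  have "finite ?S" using assms by simp
  have "u \<in> ?S" using assms by (simp add: wdom_def)
  then have "?S \<noteq> {}" by blast
  note this `finite ?S`
  then obtain q where q: "q \<in> ?S" "\<forall>y\<in>?S. fst y - snd y \<le> fst q - snd q"
    using ex_max_fin[of ?S "\<lambda>q. fst q - snd q"] by auto
  have "\<not> (\<exists>y\<in>Q. dominates y q)"
  proof
    assume "\<exists>y\<in>Q. dominates y q"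
    then obtain y where y: "y \<in> Q" "dominates y q" by blast
    then have "y \<in> ?S" using q(1) dom_wdom wdom_trans by blast
    then have "fst y - snd y \<le> fst q - snd q" using q(2) by blast
    moreover have "fst y - snd y > fst q - snd q" using y(2) by (auto simp: dominates_def)
    ultimately show False by simp
  qed
  then have "q \<in> nondominated Q" using q(1) by (simp add: nondominated_def)
  then show ?thesis using q(1) by blast
qed

lemma V_Suc: "V p w (Suc k) = V p w k \<union> (\<lambda>(q, v). (q + p k, v + w k)) ` V p w k"
proof -
  have P: "Pow {..<Suc k} = Pow {..<k} \<union> insert k ` Pow {..<k}"
    by (simp add: lessThan_Suc Pow_insert)
  have "(\<lambda>S. (sum p S, sum w S)) (insert k S) = (\<lambda>(q, v). (q + p k, v + w k)) ((\<lambda>S. (sum p S, sum w S)) S)"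
    if "S \<in> Pow {..<k}" for S
  proof -
    have "finite S" "k \<notin> S" using that finite_subset by auto
    then show ?thesis by (simp add: add.commute)
  qed
  then have "(\<lambda>S. (sum p S, sum w S)) ` (insert k ` Pow {..<k}) = (\<lambda>(q, v). (q + p k, v + w k)) ` V p w k"
    unfolding V_def image_image by (intro image_cong) auto
  then show ?thesis unfolding V_def P image_Un by simp
qed

lemma nu_props:
  "finite (nu_set p w k) \<and> nu_set p w k \<subseteq> V p w k \<and>
   (\<forall>x\<in>nu_set p w k. \<forall>y\<in>V p w k. \<not> dominates y x) \<and>
   (\<forall>v\<in>V p w k. \<exists>u\<in>nu_set p w k. wdom u v)"
proof (induction k)
  case 0
  then show ?case by (auto simp: V_def dominates_def wdom_def)
next
  case (Suc k)
  let ?N = "nu_set p w k"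
  let ?sh = "(\<lambda>(q, v). (q + p k, v + w k))"
  let ?Q = "?N \<union> ?sh ` ?N"
  have IH: "finite ?N" "?N \<subseteq> V p w k" "\<forall>x\<in>?N. \<forall>y\<in>V p w k. \<not> dominates y x"
    "\<forall>v\<in>V p w k. \<exists>u\<in>?N. wdom u v" using Suc by auto
  have eq: "nu_set p w (Suc k) = nondominated ?Q" by simp
  have finQ: "finite ?Q" using IH by simp
  have shw: "wdom (?sh u) (?sh v)" if "wdom u v" for u v
    using that by (auto simp: wdom_def split: prod.splits)
  have covQ: "\<exists>u\<in>?Q. wdom u v" if "v \<in> V p w (Suc k)" for v
  proof -
    from that consider "v \<in> V p w k" | v0 where "v0 \<in> V p w k" "v = ?sh v0"
      unfolding V_Suc by blast
    then show ?thesis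
    proof cases
      case 1 then show ?thesis using IH(4) by blast
    next
      case 2
      then obtain u where "u \<in> ?N" "wdom u v0" using IH(4) by blast
      then show ?thesis using 2 shw by blast
    qed
  qed
  have "finite (nu_set p w (Suc k))" using finQ eq by (simp add: nondominated_def)
  moreover have "nu_set p w (Suc k) \<subseteq> V p w (Suc k)"
    using IH(2) unfolding eq V_Suc nondominated_def by blast
  moreover have "\<forall>x\<in>nu_set p w (Suc k). \<forall>y\<in>V p w (Suc k). \<not> dominates y x"
  proof (intro ballI notI)
    fix x y assume x: "x \<in> nu_set p w (Suc k)" and y: "y \<in> V p w (Suc k)" and d: "dominates y x"
    obtain u where "u \<in> ?Q" "wdom u y" using covQ[OF y] by blast
    then have "dominates u x" using d wdom_dom by blast
    then show False using x `u \<in> ?Q` by (auto simp: nondominated_def)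
  qed
  moreover have "\<forall>v\<in>V p w (Suc k). \<exists>u\<in>nu_set p w (Suc k). wdom u v"
  proof
    fix v assume "v \<in> V p w (Suc k)"
    then obtain u where "u \<in> ?Q" "wdom u v" using covQ by blast
    then obtain q where "q \<in> nondominated ?Q" "wdom q u" using nondom_cover[OF finQ] by blast
    then show "\<exists>u\<in>nu_set p w (Suc k). wdom u v" using `wdom u v` wdom_trans eq by metis
  qed
  ultimately show ?case by blast
qed


definition Ev :: "nat \<Rightarrow> (nat \<Rightarrow> real) \<Rightarrow> nat \<Rightarrow> real \<Rightarrow> real \<Rightarrow> (nat \<Rightarrow> real) \<Rightarrow> bool" where
  "Ev k p i t e w \<longleftrightarrow> (\<exists>T\<in>Pow ({..<k} - {i}). \<exists>S\<in>Pow ({..<k} - {i}).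
     sum w T \<le> t \<and> (\<forall>U\<in>Pow ({..<k} - {i}). sum w U \<le> t \<longrightarrow> sum p U \<le> sum p T) \<and>
     sum p T < sum p S + p i \<and> (\<forall>U\<in>Pow ({..<k} - {i}). sum p T < sum p U + p i \<longrightarrow> sum w S \<le> sum w U) \<and>
     t < sum w S + w i \<and> sum w S + w i \<le> t + e)"

lemma key_event:
  assumes p: "\<forall>l<k. 0 \<le> p l" and y: "y \<in> nu_set p w k" and t: "0 \<le> t"
    and ty: "t < snd y" "snd y \<le> t + e"
  shows "\<exists>i<k. Ev k p i t e w"
proof -
  have yV: "y \<in> V p w k" and nd: "\<forall>z\<in>V p w k. \<not> dominates z y"
    using nu_props[of p w k] y by blast+
  obtain Y where Y: "Y \<subseteq> {..<k}" "y = (sum p Y, sum w Y)" using yV by (auto simp: V_def)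
  let ?A = "{U\<in>Pow {..<k}. sum w U \<le> t}"
  have "{} \<in> ?A" using t by simp
  moreover have "finite ?A" by simp
  ultimately obtain T0 where T0: "T0 \<in> ?A" "\<forall>U\<in>?A. sum p U \<le> sum p T0"
    using ex_max_fin[of ?A "sum p"] by blast
  have T0k: "T0 \<subseteq> {..<k}" using T0 by auto
  have "(sum p T0, sum w T0) \<in> V p w k" using T0k by (auto simp: V_def)
  then have "\<not> dominates (sum p T0, sum w T0) y" using nd by blast
  then have lt: "sum p T0 < sum p Y" using T0(1) ty Y by (auto simp: dominates_def)
  have "\<not> Y \<subseteq> T0"
  proof
    assume "Y \<subseteq> T0"
    then have "sum p Y \<le> sum p T0"
      using T0k p by (intro sum_mono2) (auto intro: finite_subset)
    then show False using lt by simp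
  qed
  then obtain i where i: "i \<in> Y" "i \<notin> T0" by blast
  have ik: "i < k" using i Y by auto
  have finY: "finite Y" using Y finite_subset by blast
  have sY: "sum p Y = p i + sum p (Y - {i})" "sum w Y = w i + sum w (Y - {i})"
    using i finY by (auto simp: sum.remove)
  let ?B = "{U\<in>Pow ({..<k} - {i}). sum p T0 < sum p U + p i}"
  have "Y - {i} \<in> ?B" using Y lt sY by auto
  moreover have "finite ?B" by simp
  ultimately obtain S where S: "S \<in> ?B" "\<forall>U\<in>?B. sum w S \<le> sum w U"
    using ex_min_fin[of ?B "sum w"] by blast
  have "t < sum w S + w i"
  proof (rule ccontr)
    assume "\<not> t < sum w S + w i"
    have finS: "finite S" using S(1) finite_subset by auto
    have iS: "i \<notin> S" using S(1) by auto
    have "sum w (insert i S) = w i + sum w S" using finS iS by simp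
    moreover have "insert i S \<subseteq> {..<k}" using S(1) ik by auto
    ultimately have "insert i S \<in> ?A" using `\<not> t < sum w S + w i` by simp
    then have "sum p (insert i S) \<le> sum p T0" using T0(2) by blast
    moreover have "sum p (insert i S) = p i + sum p S" using finS iS by simp
    moreover have "sum p T0 < sum p S + p i" using S(1) by blast
    ultimately show False by linarith
  qed
  moreover have "sum w S + w i \<le> t + e"
  proof -
    have "sum w S \<le> sum w (Y - {i})" using S(2) `Y - {i} \<in> ?B` by blast
    moreover have "snd y = sum w Y" using Y by simp
    ultimately show ?thesis using sY(2) ty by linarith
  qed
  moreover have "T0 \<in> Pow ({..<k} - {i})" using T0k i by auto
  moreover have "S \<in> Pow ({..<k} - {i})" using S(1) by blast
  moreover have "sum w T0 \<le> t" using T0(1) by blast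
  moreover have "\<forall>U\<in>Pow ({..<k} - {i}). sum w U \<le> t \<longrightarrow> sum p U \<le> sum p T0"
    using T0(2) by blast
  moreover have "sum p T0 < sum p S + p i" using S(1) by blast
  moreover have "\<forall>U\<in>Pow ({..<k} - {i}). sum p T0 < sum p U + p i \<longrightarrow> sum w S \<le> sum w U"
    using S(2) by blast
  ultimately have "Ev k p i t e w"
    unfolding Ev_def by blast
  then show ?thesis using ik by blast
qed


lemma P_snd_inj:
  assumes "y \<in> nu_set p w k" "y' \<in> nu_set p w k" "snd y = snd y'"
  shows "y = y'"
proof -
  have V: "y \<in> V p w k" "y' \<in> V p w k" and nd: "\<forall>x\<in>nu_set p w k. \<forall>z\<in>V p w k. \<not> dominates z x"
    using nu_props[of p w k] assms by blast+
  have "\<not> dominates y' y" "\<not> dominates y y'" using nd V assms by blast+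
  then have "fst y = fst y'" using assms(3) by (auto simp: dominates_def)
  then show ?thesis using assms(3) by (simp add: prod_eq_iff)
qed

lemma P_snd_range:
  assumes "\<forall>l<k. 0 \<le> w l \<and> w l \<le> 1" "y \<in> nu_set p w k"
  shows "0 \<le> snd y \<and> snd y \<le> real k"
proof -
  have "y \<in> V p w k" using nu_props[of p w k] assms by blast
  then obtain Y where Y: "Y \<subseteq> {..<k}" "y = (sum p Y, sum w Y)" by (auto simp: V_def)
  have "0 \<le> sum w Y" using Y assms(1) by (intro sum_nonneg) auto
  moreover have "sum w Y \<le> sum (\<lambda>_. 1) Y" using Y assms(1) by (intro sum_mono) auto
  moreover have "card Y \<le> k" using Y card_mono[of "{..<k}" Y] by simp
  ultimately show ?thesis using Y by simp
qed

lemma gap_exists: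
  fixes P :: "(real \<times> real) set"
  assumes "finite P" "\<And>y y'. y \<in> P \<Longrightarrow> y' \<in> P \<Longrightarrow> snd y = snd y' \<Longrightarrow> y = y'"
  shows "\<exists>M\<ge>1. \<forall>m\<ge>M. \<forall>y\<in>P. \<forall>y'\<in>P. y \<noteq> y' \<longrightarrow> 1 / real m < \<bar>snd y - snd y'\<bar>"
proof -
  let ?D = "(\<lambda>(y, y'). \<bar>snd y - snd y'\<bar>) ` {z \<in> P \<times> P. fst z \<noteq> snd z}"
  have finD: "finite ?D" using assms(1) by simp
  have Dpos: "d > 0" if "d \<in> ?D" for d
    using that assms(2) by auto
  show ?thesis
  proof (cases "?D = {}")
    case True
    then show ?thesis by (intro exI[of _ 1]) auto
  next
    case False
    define g where "g = Min ?D"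
    have gpos: "g > 0" using Min_in[OF finD False] Dpos g_def by auto
    have gle: "g \<le> \<bar>snd y - snd y'\<bar>" if "y \<in> P" "y' \<in> P" "y \<noteq> y'" for y y'
      unfolding g_def using that finD by (intro Min_le) force+
    define M where "M = nat \<lceil>1 / g\<rceil> + 1"
    have "\<forall>m\<ge>M. \<forall>y\<in>P. \<forall>y'\<in>P. y \<noteq> y' \<longrightarrow> 1 / real m < \<bar>snd y - snd y'\<bar>"
    proof (intro allI impI ballI)
      fix m y y' assume m: "M \<le> m" and yy: "y \<in> P" "y' \<in> P" "y \<noteq> y'"
      have "1 / g \<le> real (nat \<lceil>1 / g\<rceil>)" by linarith
      then have "1 / g < real m" using m unfolding M_def by linarith
      then have m1: "1 < real m * g" using gpos by (simp add: divide_less_eq)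
      have "0 < 1 / g" using gpos by simp
      then have "real m > 0" using `1 / g < real m` by linarith
      then have "1 / real m < g" using m1 by (simp add: divide_less_eq mult.commute)
      then show "1 / real m < \<bar>snd y - snd y'\<bar>" using gle[OF yy] by linarith
    qed
    then show ?thesis unfolding M_def by (intro exI[of _ "nat \<lceil>1 / g\<rceil> + 1"]) auto
  qed
qed


lemma count_bound:
  assumes p: "\<forall>l<k. 0 \<le> p l" and w: "\<forall>l<k. 0 \<le> w l \<and> w l \<le> 1"
  shows "\<exists>M. \<forall>m\<ge>M. card (nu_set p w k) \<le>
    1 + (\<Sum>j<k*m. \<Sum>i<k. of_bool (Ev k p i (real j / real m) (1 / real m) w) :: nat)"
proof -
  let ?P = "nu_set p w k"
  have finP: "finite ?P" using nu_props[of p w k] by blast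
  obtain M where M: "M \<ge> 1" "\<forall>m\<ge>M. \<forall>y\<in>?P. \<forall>y'\<in>?P. y \<noteq> y' \<longrightarrow> 1 / real m < \<bar>snd y - snd y'\<bar>"
    using gap_exists[OF finP, of] P_snd_inj[of _ p w k] by blast
  have "card ?P \<le> 1 + (\<Sum>j<k*m. \<Sum>i<k. of_bool (Ev k p i (real j / real m) (1 / real m) w) :: nat)"
    if m: "m \<ge> M" for m
  proof -
    have mpos: "real m > 0" using m M by simp
    define Pj where "Pj j = {y\<in>?P. real j / real m < snd y \<and> snd y \<le> (real j + 1) / real m}" for j
    define P0 where "P0 = {y\<in>?P. snd y \<le> 0}"
    have cover: "?P \<subseteq> P0 \<union> (\<Union>j<k*m. Pj j)"
    proof
      fix y assume y: "y \<in> ?P"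
      have r: "0 \<le> snd y" "snd y \<le> real k" using P_snd_range[OF w y] by auto
      show "y \<in> P0 \<union> (\<Union>j<k*m. Pj j)"
      proof (cases "snd y \<le> 0")
        case True then show ?thesis using y by (simp add: P0_def)
      next
        case False
        define c where "c = \<lceil>real m * snd y\<rceil>"
        have c1: "real_of_int c - 1 < real m * snd y" "real m * snd y \<le> real_of_int c"
          unfolding c_def by linarith+
        have "0 < real m * snd y" using False mpos r by simp
        then have cpos: "c \<ge> 1" unfolding c_def by linarith
        have "real m * snd y \<le> real m * real k" using r mpos by simp
        then have "c \<le> int (k * m)" unfolding c_def
          by (metis ceiling_le_iff mult.commute of_int_of_nat_eq of_nat_mult)
        define j where "j = nat c - 1"
        have jr: "real j = real_of_int c - 1" using cpos unfolding j_def by simp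
        have jlt: "j < k * m" using cpos `c \<le> int (k * m)` unfolding j_def by linarith
        have "real j / real m < snd y"
          using c1 jr mpos by (simp add: divide_less_eq mult.commute)
        moreover have "snd y \<le> (real j + 1) / real m"
          using c1 jr mpos by (simp add: le_divide_eq mult.commute)
        ultimately have "y \<in> Pj j" using y by (simp add: Pj_def)
        then show ?thesis using jlt by blast
      qed
    qed
    have "card ?P \<le> card (P0 \<union> (\<Union>j<k*m. Pj j))"
      using cover finP by (intro card_mono) (auto simp: P0_def Pj_def)
    also have "\<dots> \<le> card P0 + card (\<Union>j<k*m. Pj j)" by (rule card_Un_le)
    also have "\<dots> \<le> card P0 + (\<Sum>j<k*m. card (Pj j))" using card_UN_le[of "{..<k*m}" Pj] by simp
    also have "\<dots> \<le> 1 + (\<Sum>j<k*m. \<Sum>i<k. of_bool (Ev k p i (real j / real m) (1 / real m) w))"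
    proof (intro add_mono sum_mono)
      have finP0: "finite P0" using finP by (simp add: P0_def)
      have "\<forall>a1\<in>P0. \<forall>a2\<in>P0. a1 = a2"
      proof (intro ballI)
        fix a1 a2 assume a: "a1 \<in> P0" "a2 \<in> P0"
        have "snd a1 = 0" using a(1) P_snd_range[OF w, of a1 p] by (simp add: P0_def)
        moreover have "snd a2 = 0" using a(2) P_snd_range[OF w, of a2 p] by (simp add: P0_def)
        ultimately have "snd a1 = snd a2" by simp
        then show "a1 = a2" using a P_snd_inj[of a1 p w k a2] by (simp add: P0_def)
      qed
      then show "card P0 \<le> 1" using card_le_Suc0_iff_eq[OF finP0] by simp
    next
      fix j assume "j \<in> {..<k*m}"
      show "card (Pj j) \<le> (\<Sum>i<k. of_bool (Ev k p i (real j / real m) (1 / real m) w))"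
      proof (cases "Pj j = {}")
        case True then show ?thesis by simp
      next
        case False
        then obtain y where y: "y \<in> Pj j" by blast
        have t0: "0 \<le> real j / real m" by simp
        have "real j / real m < snd y" "snd y \<le> real j / real m + 1 / real m"
          using y by (auto simp: Pj_def add_divide_distrib)
        then obtain i where i: "i < k" "Ev k p i (real j / real m) (1 / real m) w"
          using key_event[OF p _ t0, of y w "1 / real m"] y by (auto simp: Pj_def)
        have finPj: "finite (Pj j)" using finP by (simp add: Pj_def)
        have "\<forall>a1\<in>Pj j. \<forall>a2\<in>Pj j. a1 = a2"
        proof (intro ballI)
          fix a1 a2 assume a: "a1 \<in> Pj j" "a2 \<in> Pj j"
          have "\<bar>snd a1 - snd a2\<bar> \<le> 1 / real m"
            using a by (auto simp: Pj_def add_divide_distrib)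
          then show "a1 = a2" using M(2) m a by (force simp: Pj_def)
        qed
        then have "card (Pj j) \<le> 1" using card_le_Suc0_iff_eq[OF finPj] by simp
        also have "(1::nat) = of_bool (Ev k p i (real j / real m) (1 / real m) w)" using i by simp
        also have "\<dots> \<le> (\<Sum>i<k. of_bool (Ev k p i (real j / real m) (1 / real m) w) :: nat)"
          by (rule member_le_sum[of i "{..<k}" "\<lambda>i. of_bool (Ev k p i (real j / real m) (1 / real m) w) :: nat"])
            (use i(1) in auto)
        finally show ?thesis .
      qed
    qed
    finally show ?thesis .
  qed
  then show ?thesis by blast
qed



definition UM :: "(nat \<Rightarrow> real) \<Rightarrow> real \<Rightarrow> nat \<Rightarrow> real measure" where
  "UM a \<phi> = (\<lambda>i. uniform_measure lborel {a i .. a i + 1 / \<phi>})"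

lemma UM_prob:
  assumes "\<phi> \<ge> 1" shows "prob_space (UM a \<phi> i)"
proof -
  have "0 < 1 / \<phi>" using assms by simp
  then have e: "emeasure lborel {a i .. a i + 1 / \<phi>} = ennreal (1 / \<phi>)"
    using emeasure_lborel_Icc[of "a i" "a i + 1 / \<phi>"] by simp
  show ?thesis unfolding UM_def
    by (rule prob_space_uniform_measure) (use e `0 < 1 / \<phi>` in auto)
qed

lemma sets_UM[simp, measurable_cong]: "sets (UM a \<phi> i) = sets borel"
  by (simp add: UM_def)

lemma sum_meas:
  assumes "T \<subseteq> {..<n}"
  shows "(\<lambda>w. sum w T) \<in> borel_measurable (PiM {..<n} (UM a \<phi>))"
proof (intro borel_measurable_sum)
  fix l assume "l \<in> T"
  then have "l \<in> {..<n}" using assms by auto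
  then have "(\<lambda>w. w l) \<in> measurable (PiM {..<n} (UM a \<phi>)) (UM a \<phi> l)"
    by (rule measurable_component_singleton)
  then show "(\<lambda>w. w l) \<in> borel_measurable (PiM {..<n} (UM a \<phi>))"
    using measurable_cong_sets[OF refl sets_UM[of a \<phi> l]] by metis
qed

lemma Ev_pred:
  assumes "i < k" "k \<le> n"
  shows "Ev k p i t e \<in> measurable (PiM {..<n} (UM a \<phi>)) (count_space UNIV)"
proof -
  have [measurable]: "\<And>T. T \<in> Pow ({..<k} - {i}) \<Longrightarrow> (\<lambda>w. sum w T) \<in> borel_measurable (PiM {..<n} (UM a \<phi>))"
    using assms by (intro sum_meas) auto
  have [measurable]: "(\<lambda>w. w i) \<in> borel_measurable (PiM {..<n} (UM a \<phi>))"
    using sum_meas[of "{i}" n a \<phi>] assms by simp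
  note sm = sum_meas[of _ n a \<phi>]
  have wi: "(\<lambda>w. w i) \<in> borel_measurable (PiM {..<n} (UM a \<phi>))"
    using sum_meas[of "{i}" n a \<phi>] assms by simp
  have le: "\<And>f g :: _ \<Rightarrow> real. f \<in> borel_measurable (PiM {..<n} (UM a \<phi>)) \<Longrightarrow> g \<in> borel_measurable (PiM {..<n} (UM a \<phi>))
     \<Longrightarrow> (\<lambda>w. f w \<le> g w) \<in> measurable (PiM {..<n} (UM a \<phi>)) (count_space UNIV)"
    unfolding Measurable.pred_def by (rule borel_measurable_le)
  have fin: "finite (Pow ({..<k} - {i}))" by simp
  have c: "\<And>P. (\<lambda>w. P) \<in> measurable (PiM {..<n} (UM a \<phi>)) (count_space UNIV)" by (rule measurable_const) simp
  show ?thesis unfolding Ev_def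
    apply (rule pred_intros_finite(4)[OF fin])
    apply (rule pred_intros_finite(4)[OF fin])
    apply (intro pred_intros_logic(3) pred_intros_logic(4) pred_intros_finite(3)[OF fin] c)
    apply (auto intro!: le borel_measurable_pred_less borel_measurable_add wi sm borel_measurable_const)
    apply (use assms in auto)+
    done
qed


lemma Ev_interval:
  assumes "Ev k p i t e w"
  shows "\<exists>c. \<forall>w'. (\<forall>l. l \<noteq> i \<longrightarrow> w' l = w l) \<longrightarrow> Ev k p i t e w' \<longrightarrow> t - c < w' i \<and> w' i \<le> t - c + e"
proof -
  let ?F = "Pow ({..<k} - {i})"
  obtain T S where T: "T \<in> ?F" and S: "S \<in> ?F" and
    h1: "sum w T \<le> t" and h2: "\<forall>U\<in>?F. sum w U \<le> t \<longrightarrow> sum p U \<le> sum p T" and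
    h3: "sum p T < sum p S + p i" and h4: "\<forall>U\<in>?F. sum p T < sum p U + p i \<longrightarrow> sum w S \<le> sum w U"
    using assms unfolding Ev_def by blast
  show ?thesis
  proof (intro exI[of _ "sum w S"] allI impI)
    fix w' assume agree: "\<forall>l. l \<noteq> i \<longrightarrow> w' l = w l" and ev: "Ev k p i t e w'"
    have eqs: "sum w' U = sum w U" if "U \<in> ?F" for U
      using that agree by (intro sum.cong) auto
    obtain T' S' where T': "T' \<in> ?F" and S': "S' \<in> ?F" and
      g1: "sum w' T' \<le> t" and g2: "\<forall>U\<in>?F. sum w' U \<le> t \<longrightarrow> sum p U \<le> sum p T'" and
      g3: "sum p T' < sum p S' + p i" and g4: "\<forall>U\<in>?F. sum p T' < sum p U + p i \<longrightarrow> sum w' S' \<le> sum w' U" and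
      g5: "t < sum w' S' + w' i" and g6: "sum w' S' + w' i \<le> t + e"
      using ev unfolding Ev_def by blast
    have "sum p T' \<le> sum p T" using h2 T' g1 eqs[OF T'] by auto
    moreover have "sum p T \<le> sum p T'" using g2 T h1 eqs[OF T] by auto
    ultimately have pT: "sum p T = sum p T'" by simp
    have "sum w' S' \<le> sum w' S" using g4 S h3 pT by auto
    moreover have "sum w S \<le> sum w S'" using h4 S' g3 pT by auto
    ultimately have "sum w' S' = sum w S" using eqs[OF S] eqs[OF S'] by simp
    then show "t - sum w S < w' i \<and> w' i \<le> t - sum w S + e" using g5 g6 by simp
  qed
qed

lemma prob_Ev:
  assumes phi: "\<phi> \<ge> 1" and ik: "i < k" and kn: "k \<le> n" and e: "e \<ge> 0"
  shows "(\<integral>\<^sup>+w. indicator {w \<in> space (PiM {..<n} (UM a \<phi>)). Ev k p i t e w} w \<partial>PiM {..<n} (UM a \<phi>))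
     \<le> ennreal (e * \<phi>)"
proof -
  let ?M = "UM a \<phi>"
  define I' where "I' = {..<n} - {i}"
  interpret P: product_sigma_finite ?M
    by (intro product_sigma_finite.intro prob_space_imp_sigma_finite UM_prob phi)
  define f :: "(nat \<Rightarrow> real) \<Rightarrow> ennreal" where
    "f = indicator {w \<in> space (PiM {..<n} ?M). Ev k p i t e w}"
  have ins: "insert i I' = {..<n}" using ik kn unfolding I'_def by auto
  have "{w \<in> space (PiM {..<n} ?M). Ev k p i t e w} \<in> sets (PiM {..<n} ?M)"
  proof -
    have "Ev k p i t e \<in> measurable (PiM {..<n} ?M) (count_space UNIV)" by (rule Ev_pred[OF ik kn])
    then show ?thesis unfolding Measurable.pred_def .
  qed
  then have fmeas: "f \<in> borel_measurable (PiM (insert i I') ?M)"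
    unfolding f_def ins by (rule borel_measurable_indicator)
  have "integral\<^sup>N (PiM {..<n} ?M) f = (\<integral>\<^sup>+ x. (\<integral>\<^sup>+ y. f (x(i := y)) \<partial>(?M i)) \<partial>(PiM I' ?M))"
    using P.product_nn_integral_insert[of I' i f] fmeas ins unfolding I'_def by simp
  also have "\<dots> \<le> (\<integral>\<^sup>+ x. ennreal (e * \<phi>) \<partial>(PiM I' ?M))"
  proof (rule nn_integral_mono)
    fix x
    have fle: "f z \<le> (if Ev k p i t e z then 1 else 0)" for z
      unfolding f_def by (auto split: split_indicator)
    show "(\<integral>\<^sup>+ y. f (x(i := y)) \<partial>(?M i)) \<le> ennreal (e * \<phi>)"
    proof (cases "\<exists>y0. Ev k p i t e (x(i := y0))")
      case False
      then have "(\<integral>\<^sup>+ y. f (x(i := y)) \<partial>(?M i)) = (\<integral>\<^sup>+ y. 0 \<partial>(?M i))"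
        using fle by (intro nn_integral_cong) (metis le_zero_eq)
      then show ?thesis by simp
    next
      case True
      then obtain y0 where y0: "Ev k p i t e (x(i := y0))" by blast
      obtain c where c: "\<forall>w'. (\<forall>l. l \<noteq> i \<longrightarrow> w' l = (x(i := y0)) l) \<longrightarrow> Ev k p i t e w' \<longrightarrow>
          t - c < w' i \<and> w' i \<le> t - c + e"
        using Ev_interval[OF y0] by blast
      define J where "J = {t - c <.. t - c + e}"
      have "f (x(i := y)) \<le> indicator J y" for y
      proof (cases "Ev k p i t e (x(i := y))")
        case True
        then have "y \<in> J" using c[rule_format, of "x(i := y)"] unfolding J_def by auto
        then show ?thesis using fle[of "x(i := y)"] True by simp
      next
        case False
        then show ?thesis using fle[of "x(i := y)"] by simp
      qed
      then have "(\<integral>\<^sup>+ y. f (x(i := y)) \<partial>(?M i)) \<le> (\<integral>\<^sup>+ y. indicator J y \<partial>(?M i))"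
        by (intro nn_integral_mono) auto
      also have "\<dots> = emeasure (?M i) J" unfolding J_def by (intro nn_integral_indicator) simp
      also have "\<dots> = emeasure lborel ({a i .. a i + 1 / \<phi>} \<inter> J) / emeasure lborel {a i .. a i + 1 / \<phi>}"
        unfolding UM_def J_def by (intro emeasure_uniform_measure) auto
      also have "\<dots> \<le> ennreal e / ennreal (1 / \<phi>)"
      proof -
        have "emeasure lborel ({a i .. a i + 1 / \<phi>} \<inter> J) \<le> emeasure lborel J"
          unfolding J_def by (intro emeasure_mono) auto
        also have "\<dots> = ennreal e" unfolding J_def using e by simp
        finally have 1: "emeasure lborel ({a i .. a i + 1 / \<phi>} \<inter> J) \<le> ennreal e" .
        have "0 < 1 / \<phi>" using phi by simp
        then have 2: "emeasure lborel {a i .. a i + 1 / \<phi>} = ennreal (1 / \<phi>)"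
          using emeasure_lborel_Icc[of "a i" "a i + 1 / \<phi>"] by simp
        show ?thesis unfolding 2 by (rule divide_right_mono_ennreal[OF 1])
      qed
      also have "\<dots> = ennreal (e * \<phi>)"
        using phi e by (subst divide_ennreal) auto
      finally show ?thesis .
    qed
  qed
  also have "\<dots> = ennreal (e * \<phi>)"
  proof -
    interpret Q: prob_space "PiM I' ?M" by (intro prob_space_PiM UM_prob[OF phi])
    show ?thesis by (simp add: Q.emeasure_space_1)
  qed
  finally show ?thesis unfolding f_def .
qed


definition EvS :: "nat \<Rightarrow> (nat \<Rightarrow> real) \<Rightarrow> real \<Rightarrow> (nat \<Rightarrow> real) \<Rightarrow> nat \<Rightarrow> nat \<Rightarrow> nat \<Rightarrow> nat \<Rightarrow> (nat \<Rightarrow> real) set" where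
  "EvS n a \<phi> p k i j m = {w \<in> space (PiM {..<n} (UM a \<phi>)). Ev k p i (real j / real m) (1 / real m) w}"

definition uu :: "nat \<Rightarrow> (nat \<Rightarrow> real) \<Rightarrow> real \<Rightarrow> (nat \<Rightarrow> real) \<Rightarrow> nat \<Rightarrow> nat \<Rightarrow> (nat \<Rightarrow> real) \<Rightarrow> ennreal" where
  "uu n a \<phi> p k m w = 1 + (\<Sum>j<k*m. \<Sum>i<k. indicator (EvS n a \<phi> p k i j m) w)"

lemma EvS_sets:
  assumes "i < k" "k \<le> n"
  shows "EvS n a \<phi> p k i j m \<in> sets (PiM {..<n} (UM a \<phi>))"
proof -
  have "Ev k p i (real j / real m) (1 / real m) \<in> measurable (PiM {..<n} (UM a \<phi>)) (count_space UNIV)"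
    by (rule Ev_pred[OF assms])
  then show ?thesis unfolding Measurable.pred_def EvS_def .
qed

lemma uu_meas:
  assumes "k \<le> n"
  shows "uu n a \<phi> p k m \<in> borel_measurable (PiM {..<n} (UM a \<phi>))"
  unfolding uu_def using assms
  by (intro borel_measurable_add borel_measurable_const borel_measurable_sum borel_measurable_indicator EvS_sets) auto

lemma uu_int:
  assumes phi: "\<phi> \<ge> 1" and kn: "k \<le> n"
  shows "integral\<^sup>N (PiM {..<n} (UM a \<phi>)) (uu n a \<phi> p k m) \<le> ennreal (1 + real k ^ 2 * \<phi>)"
proof -
  let ?N = "PiM {..<n} (UM a \<phi>)"
  interpret Q: prob_space ?N by (intro prob_space_PiM UM_prob[OF phi])
  have "integral\<^sup>N ?N (uu n a \<phi> p k m) =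
      (\<integral>\<^sup>+w. 1 \<partial>?N) + (\<Sum>j<k*m. \<Sum>i<k. \<integral>\<^sup>+w. indicator (EvS n a \<phi> p k i j m) w \<partial>?N)"
  proof -
    have m: "indicator (EvS n a \<phi> p k i j m) \<in> borel_measurable ?N" if "i < k" for i j
      using that kn by (intro borel_measurable_indicator EvS_sets)
    have "(\<integral>\<^sup>+w. (\<Sum>j<k*m. \<Sum>i<k. indicator (EvS n a \<phi> p k i j m) w) \<partial>?N)
       = (\<Sum>j<k*m. \<integral>\<^sup>+w. (\<Sum>i<k. indicator (EvS n a \<phi> p k i j m) w) \<partial>?N)"
      using m by (intro nn_integral_sum) (auto intro!: borel_measurable_sum)
    also have "\<dots> = (\<Sum>j<k*m. \<Sum>i<k. \<integral>\<^sup>+w. indicator (EvS n a \<phi> p k i j m) w \<partial>?N)"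
      using m by (intro sum.cong refl nn_integral_sum) auto
    finally have s: "(\<integral>\<^sup>+w. (\<Sum>j<k*m. \<Sum>i<k. indicator (EvS n a \<phi> p k i j m) w) \<partial>?N)
       = (\<Sum>j<k*m. \<Sum>i<k. \<integral>\<^sup>+w. indicator (EvS n a \<phi> p k i j m) w \<partial>?N)" .
    show ?thesis unfolding uu_def using m
      by (subst nn_integral_add) (auto intro!: borel_measurable_sum simp: s)
  qed
  also have "\<dots> \<le> 1 + (\<Sum>j<k*m. \<Sum>i<k. ennreal (1 / real m * \<phi>))"
  proof -
    have b: "(\<integral>\<^sup>+w. indicator (EvS n a \<phi> p k i j m) w \<partial>?N) \<le> ennreal (1 / real m * \<phi>)" if "i < k" for i j
      unfolding EvS_def using prob_Ev[OF phi that kn, of "1 / real m" a p "real j / real m"] by simp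
    show ?thesis
      apply (rule add_mono)
       apply (simp add: Q.emeasure_space_1)
      apply (intro sum_mono)
      using b by auto
  qed
  also have "\<dots> = ennreal (1 + real (k * m) * (real k * (1 / real m * \<phi>)))"
  proof -
    define c where "c = 1 / real m * \<phi>"
    have c0: "0 \<le> c" using phi unfolding c_def by simp
    have i1: "(\<Sum>i<k. ennreal c) = ennreal (\<Sum>i<k. c)" by (rule sum_ennreal) (simp add: c0)
    have i2: "(\<Sum>j<k*m. ennreal (\<Sum>i<k. c)) = ennreal (\<Sum>j<k*m. \<Sum>i<k. c)"
      by (rule sum_ennreal) (simp add: c0)
    have i3: "(\<Sum>j<k*m. \<Sum>i<k. c) = real (k * m) * (real k * c)" by simp
    have "1 + (\<Sum>j<k*m. \<Sum>i<k. ennreal c) = ennreal 1 + ennreal (real (k * m) * (real k * c))"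
      unfolding i1 i2 i3 by simp
    also have "\<dots> = ennreal (1 + real (k * m) * (real k * c))"
      using c0 by (subst ennreal_plus) auto
    finally show ?thesis unfolding c_def .
  qed
  also have "\<dots> \<le> ennreal (1 + real k ^ 2 * \<phi>)"
  proof (rule ennreal_leI)
    show "1 + real (k * m) * (real k * (1 / real m * \<phi>)) \<le> 1 + real k ^ 2 * \<phi>"
    proof (cases "m = 0")
      case True then show ?thesis using phi by simp
    next
      case False then show ?thesis by (simp add: power2_eq_square field_simps)
    qed
  qed
  finally show ?thesis .
qed


lemma card_le_uu:
  assumes p: "\<forall>i<n. p i \<ge> 0" and kn: "k < n"
    and w: "w \<in> space (PiM {..<n} (UM a \<phi>))" and wr: "\<forall>l<n. 0 \<le> w l \<and> w l \<le> 1"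
  shows "ennreal (real (card (nu_set p w k))) \<le> liminf (\<lambda>m. uu n a \<phi> p k m w)"
proof -
  obtain M where M: "\<forall>m\<ge>M. card (nu_set p w k) \<le>
    1 + (\<Sum>j<k*m. \<Sum>i<k. of_bool (Ev k p i (real j / real m) (1 / real m) w) :: nat)"
    using count_bound[of k p w] p wr kn by auto
  have "ennreal (real (card (nu_set p w k))) \<le> uu n a \<phi> p k m w" if "m \<ge> M" for m
  proof -
    have ind: "indicator (EvS n a \<phi> p k i j m) w = (of_bool (Ev k p i (real j / real m) (1 / real m) w) :: ennreal)" for i j
      using w by (simp add: EvS_def indicator_def)
    have "ennreal (real (card (nu_set p w k))) = of_nat (card (nu_set p w k))"
      by (simp add: ennreal_of_nat_eq_real_of_nat)
    also have "\<dots> \<le> of_nat (1 + (\<Sum>j<k*m. \<Sum>i<k. of_bool (Ev k p i (real j / real m) (1 / real m) w) :: nat))"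
      using M that by (subst of_nat_le_iff) auto
    also have "\<dots> = uu n a \<phi> p k m w"
      unfolding uu_def ind by (simp add: of_nat_sum)
    finally show ?thesis .
  qed
  then show ?thesis
    by (intro Liminf_bounded) (auto simp: eventually_sequentially)
qed

theorem corollary2p8:
  shows "\<exists>C::real. \<forall>(n::nat) (\<phi>::real) (p::nat \<Rightarrow> real) (a::nat \<Rightarrow> real).
     \<phi> \<ge> 1 \<longrightarrow> (\<forall>i<n. p i \<ge> 0) \<longrightarrow> (\<forall>i<n. 0 \<le> a i \<and> a i + 1 / \<phi> \<le> 1) \<longrightarrow>
     (\<integral>\<^sup>+ w. ennreal (real (nu_time n p w))
        \<partial>(PiM {..<n} (\<lambda>i. uniform_measure lborel {a i .. a i + 1 / \<phi>})))
       \<le> ennreal (C * real n ^ 3 * \<phi>)"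
proof (intro exI[of _ 2] allI impI)
  fix n :: nat and \<phi> :: real and p a :: "nat \<Rightarrow> real"
  assume phi: "\<phi> \<ge> 1" and p: "\<forall>i<n. p i \<ge> 0" and a: "\<forall>i<n. 0 \<le> a i \<and> a i + 1 / \<phi> \<le> 1"
  let ?M = "UM a \<phi>"
  let ?N = "PiM {..<n} ?M"
  have Neq: "PiM {..<n} (\<lambda>i. uniform_measure lborel {a i .. a i + 1 / \<phi>}) = ?N"
    by (simp add: UM_def)
  interpret PP: product_prob_space ?M "{..<n}"
    by (intro product_prob_space.intro product_prob_space_axioms.intro product_sigma_finite.intro
        prob_space_imp_sigma_finite UM_prob phi)
  have AEr: "AE w in ?N. \<forall>l\<in>{..<n}. a l \<le> w l \<and> w l \<le> a l + 1 / \<phi>"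
  proof (rule AE_finite_allI)
    fix l assume l: "l \<in> {..<n}"
    have "AE x in ?M l. a l \<le> x \<and> x \<le> a l + 1 / \<phi>"
      unfolding UM_def by (rule AE_uniform_measureI) auto
    then show "AE w in ?N. a l \<le> w l \<and> w l \<le> a l + 1 / \<phi>"
      using PP.AE_component[OF l] by blast
  qed simp
  have pt: "AE w in ?N. ennreal (real (nu_time n p w)) \<le> (\<Sum>k<n. liminf (\<lambda>m. uu n a \<phi> p k m w))"
    using AE_space AEr
  proof (eventually_elim)
    case (elim w)
    have wr: "\<forall>l<n. 0 \<le> w l \<and> w l \<le> 1"
    proof (intro allI impI)
      fix l assume "l < n"
      then have "a l \<le> w l \<and> w l \<le> a l + 1 / \<phi>" "0 \<le> a l \<and> a l + 1 / \<phi> \<le> 1"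
        using elim(2) a by auto
      then show "0 \<le> w l \<and> w l \<le> 1" by linarith
    qed
    have "ennreal (real (nu_time n p w)) = (\<Sum>k<n. ennreal (real (card (nu_set p w k))))"
    proof -
      have en: "\<And>N::nat. ennreal (real N) = of_nat N" by (simp add: ennreal_of_nat_eq_real_of_nat)
      show ?thesis unfolding nu_time_def of_nat_sum by (subst sum_ennreal[symmetric]) (auto simp: en)
    qed
    also have "\<dots> \<le> (\<Sum>k<n. liminf (\<lambda>m. uu n a \<phi> p k m w))"
      using card_le_uu[OF p _ elim(1) wr] by (intro sum_mono) auto
    finally show ?case .
  qed
  have "(\<integral>\<^sup>+ w. ennreal (real (nu_time n p w)) \<partial>?N) \<le> (\<integral>\<^sup>+ w. (\<Sum>k<n. liminf (\<lambda>m. uu n a \<phi> p k m w)) \<partial>?N)"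
    by (rule nn_integral_mono_AE[OF pt])
  also have "\<dots> = (\<Sum>k<n. \<integral>\<^sup>+ w. liminf (\<lambda>m. uu n a \<phi> p k m w) \<partial>?N)"
    by (intro nn_integral_sum borel_measurable_liminf uu_meas) auto
  also have "\<dots> \<le> (\<Sum>k<n. ennreal (1 + real k ^ 2 * \<phi>))"
  proof (intro sum_mono)
    fix k assume k: "k \<in> {..<n}"
    have "(\<integral>\<^sup>+ w. liminf (\<lambda>m. uu n a \<phi> p k m w) \<partial>?N) \<le> liminf (\<lambda>m. integral\<^sup>N ?N (uu n a \<phi> p k m))"
      using k by (intro nn_integral_liminf uu_meas) auto
    also have "\<dots> \<le> limsup (\<lambda>m. integral\<^sup>N ?N (uu n a \<phi> p k m))"
      by (rule Liminf_le_Limsup) simp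
    also have "\<dots> \<le> ennreal (1 + real k ^ 2 * \<phi>)"
      using k by (intro Limsup_bounded always_eventually allI uu_int phi) auto
    finally show "(\<integral>\<^sup>+ w. liminf (\<lambda>m. uu n a \<phi> p k m w) \<partial>?N) \<le> ennreal (1 + real k ^ 2 * \<phi>)" .
  qed
  also have "\<dots> = ennreal (\<Sum>k<n. 1 + real k ^ 2 * \<phi>)"
    using phi by (intro sum_ennreal) auto
  also have "\<dots> \<le> ennreal (2 * real n ^ 3 * \<phi>)"
  proof (rule ennreal_leI)
    have "(\<Sum>k<n. 1 + real k ^ 2 * \<phi>) \<le> (\<Sum>k<n. 1 + real n ^ 2 * \<phi>)"
      using phi by (intro sum_mono) (auto intro!: mult_right_mono power_mono)
    also have "\<dots> = real n + real n ^ 3 * \<phi>" by (simp add: algebra_simps power3_eq_cube power2_eq_square)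
    also have "\<dots> \<le> 2 * real n ^ 3 * \<phi>"
    proof (cases "n = 0")
      case True then show ?thesis by simp
    next
      case False
      then have "real n \<le> real n ^ 3"
        by (metis One_nat_def less_one linorder_not_less numeral_le_iff numerals(1) of_nat_le_iff of_nat_power power_increasing semiring_norm(68) power_one_right zero_less_numeral less_numeral_extra(1) bot_nat_0.not_eq_extremum)
      also have "\<dots> \<le> real n ^ 3 * \<phi>"
      proof -
        have "0 \<le> real n ^ 3" by simp
        then show ?thesis using mult_left_mono[OF phi, of "real n ^ 3"] by simp
      qed
      finally show ?thesis by (simp add: mult.commute)
    qed
    finally show "(\<Sum>k<n. 1 + real k ^ 2 * \<phi>) \<le> 2 * real n ^ 3 * \<phi>" .
  qed
  finally show "(\<integral>\<^sup>+ w. ennreal (real (nu_time n p w))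
        \<partial>(PiM {..<n} (\<lambda>i. uniform_measure lborel {a i .. a i + 1 / \<phi>}))) \<le> ennreal (2 * real n ^ 3 * \<phi>)"
    unfolding Neq .
qed

end
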